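(* Let $n\ge 1$, $m_1,\ldots,m_k\in\mathbb{N}$ with $m_1+\cdots+m_k=n$. For an integer $p$ let $V_p:\{|z|=1\}\to U(n)$, $V_p(z)=\mathrm{diag}(z^p,1,\ldots,1)$, and define $$B_{n,p}(m_1,\ldots,m_k)=\{(f_1,f_2)\mid f_1,f_2\in C(D^2\to M_n(\mathbb{C})),\ f_1(z)=V_p(z)^*f_2(z)V_p(z)\text{ for }|z|=1,\ f_1(0)\in M_{m_1}(\mathbb{C})\oplus\cdots\oplus M_{m_k}(\mathbb{C})\},$$ a $C^*$-algebra under pointwise operations and the sup norm, where $D^2=\{z\in\mathbb{C}:|z|\le1\}$. If $l_1\equiv l_2 \pmod{\gcd(m_1,\ldots,m_k)}$, then $B_{n,l_1}(m_1,\ldots,m_k)\simeq B_{n,l_2}(m_1,\ldots,m_k)$.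
   Context: $B_{n,p}(m_1,\ldots,m_k)$ is the algebra of continuous sections of the algebraic bundle $\mathcal{B}_{n,p}$ over the $2$-sphere with fibre $M_n(\mathbb{C})$ obtained by gluing two closed disks (the two hemispheres) along the equator via the sewing map $V_p$ (acting by $m\mapsto V_p^*mV_p$), whose sections are required to take block-diagonal values (blocks of sizes $m_1,\ldots,m_k$) at a fixed point, taken as the centre $0$ of the first disk. $M_{m_1}(\mathbb{C})\oplus\cdots\oplus M_{m_k}(\mathbb{C})$ denotes the block-diagonal subalgebra of $M_n(\mathbb{C})$. *)

theory Defs
  imports "HOL-Analysis.Analysis"
begin

text \<open>n x n complex matrices are represented as functions nat => nat => complex
  whose entries vanish outside the index range {0..<n} x {0..<n}.\<close>
type_synonym cmat = "nat \<Rightarrow> nat \<Rightarrow> complex"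

definition mat_n :: "nat \<Rightarrow> cmat set" where
  "mat_n n = {A. \<forall>i j. (n \<le> i \<or> n \<le> j) \<longrightarrow> A i j = 0}"

definition mzero :: cmat where "mzero = (\<lambda>i j. 0)"

definition madd :: "cmat \<Rightarrow> cmat \<Rightarrow> cmat" where
  "madd A B = (\<lambda>i j. A i j + B i j)"

definition msmult :: "complex \<Rightarrow> cmat \<Rightarrow> cmat" where
  "msmult c A = (\<lambda>i j. c * A i j)"

definition mmul :: "nat \<Rightarrow> cmat \<Rightarrow> cmat \<Rightarrow> cmat" where
  "mmul n A B = (\<lambda>i j. if i < n \<and> j < n then (\<Sum>k<n. A i k * B k j) else 0)"

definition madj :: "cmat \<Rightarrow> cmat" where
  "madj A = (\<lambda>i j. cnj (A j i))"

definition Vp :: "nat \<Rightarrow> int \<Rightarrow> complex \<Rightarrow> cmat" where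
  "Vp n p z = (\<lambda>i j. if i = j \<and> i < n then (if i = 0 then z powi p else 1) else 0)"

text \<open>Index of the diagonal block (of sizes ms) containing row/column i.\<close>
definition blk :: "nat list \<Rightarrow> nat \<Rightarrow> nat" where
  "blk ms i = card {t. t < length ms \<and> sum_list (take (Suc t) ms) \<le> i}"

definition block_diag :: "nat list \<Rightarrow> cmat \<Rightarrow> bool" where
  "block_diag ms A \<longleftrightarrow> (\<forall>i j. A i j \<noteq> 0 \<longrightarrow> blk ms i = blk ms j)"

definition disk :: "complex set" where "disk = cball 0 1"

definition Cdisk :: "nat \<Rightarrow> (complex \<Rightarrow> cmat) set" where
  "Cdisk n = {f. (\<forall>z. f z \<in> mat_n n) \<and> (\<forall>z. z \<notin> disk \<longrightarrow> f z = mzero)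
                \<and> (\<forall>i j. continuous_on disk (\<lambda>z. f z i j))}"

definition Balg :: "nat \<Rightarrow> int \<Rightarrow> nat list \<Rightarrow> ((complex \<Rightarrow> cmat) \<times> (complex \<Rightarrow> cmat)) set" where
  "Balg n p ms = {(f1, f2). f1 \<in> Cdisk n \<and> f2 \<in> Cdisk n
      \<and> (\<forall>z. cmod z = 1 \<longrightarrow> f1 z = mmul n (madj (Vp n p z)) (mmul n (f2 z) (Vp n p z)))
      \<and> block_diag ms (f1 0)}"

definition badd where "badd x y = (\<lambda>z. madd (fst x z) (fst y z), \<lambda>z. madd (snd x z) (snd y z))"
definition bsmult where "bsmult c x = (\<lambda>z. msmult c (fst x z), \<lambda>z. msmult c (snd x z))"
definition bmul where "bmul n x y = (\<lambda>z. mmul n (fst x z) (fst y z), \<lambda>z. mmul n (snd x z) (snd y z))"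
definition bstar where "bstar x = (\<lambda>z. madj (fst x z), \<lambda>z. madj (snd x z))"

text \<open>*-isomorphism between the two algebras (bijective *-homomorphism;
  such maps between C*-algebras are automatically isometric).\<close>
definition star_iso_B :: "nat \<Rightarrow> int \<Rightarrow> int \<Rightarrow> nat list \<Rightarrow> bool" where
  "star_iso_B n p q ms \<longleftrightarrow> (\<exists>\<Phi>. bij_betw \<Phi> (Balg n p ms) (Balg n q ms)
     \<and> (\<forall>x\<in>Balg n p ms. \<forall>y\<in>Balg n p ms.
           \<Phi> (badd x y) = badd (\<Phi> x) (\<Phi> y) \<and> \<Phi> (bmul n x y) = bmul n (\<Phi> x) (\<Phi> y))
     \<and> (\<forall>x\<in>Balg n p ms. \<forall>c. \<Phi> (bsmult c x) = bsmult c (\<Phi> x))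
     \<and> (\<forall>x\<in>Balg n p ms. \<Phi> (bstar x) = bstar (\<Phi> x)))"

end

theory Submission
  imports Defs
begin


definition idm :: "nat \<Rightarrow> cmat" where "idm n = (\<lambda>i j. if i = j \<and> i < n then 1 else 0)"
definition diagm :: "nat \<Rightarrow> (nat \<Rightarrow> complex) \<Rightarrow> cmat" where
  "diagm n d = (\<lambda>i j. if i = j \<and> i < n then d i else 0)"

lemma mmul_assoc: "mmul n (mmul n A B) C = mmul n A (mmul n B C)"
  unfolding mmul_def
  by (rule ext)+ (auto simp: sum_distrib_left sum_distrib_right mult.assoc intro: sum.swap)

lemma madj_mmul: "madj (mmul n A B) = mmul n (madj B) (madj A)"
  unfolding mmul_def madj_def by (rule ext)+ (auto simp: mult.commute)

lemma madj_madj[simp]: "madj (madj A) = A"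
  unfolding madj_def by simp

lemma mmul_in: "mmul n A B \<in> mat_n n"
  unfolding mmul_def mat_n_def by auto

lemma madj_in: "A \<in> mat_n n \<Longrightarrow> madj A \<in> mat_n n"
  unfolding madj_def mat_n_def by auto

lemma diagm_in: "diagm n d \<in> mat_n n"
  unfolding diagm_def mat_n_def by auto

lemma mmul_diag_left: "A \<in> mat_n n \<Longrightarrow> mmul n (diagm n d) A = (\<lambda>i j. d i * A i j)"
proof (rule ext)+
  fix i j assume A: "A \<in> mat_n n"
  show "mmul n (diagm n d) A i j = d i * A i j"
  proof (cases "i < n \<and> j < n")
    case True
    have "(\<Sum>k<n. diagm n d i k * A k j) = (\<Sum>k<n. if k = i then d i * A i j else 0)"
      by (rule sum.cong) (auto simp: diagm_def)
    also have "\<dots> = d i * A i j" using True by simp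
    finally show ?thesis using True by (simp add: mmul_def)
  next
    case False then show ?thesis using A by (auto simp: mmul_def mat_n_def)
  qed
qed

lemma mmul_diag_right: "A \<in> mat_n n \<Longrightarrow> mmul n A (diagm n d) = (\<lambda>i j. A i j * d j)"
proof (rule ext)+
  fix i j assume A: "A \<in> mat_n n"
  show "mmul n A (diagm n d) i j = A i j * d j"
  proof (cases "i < n \<and> j < n")
    case True
    have "(\<Sum>k<n. A i k * diagm n d k j) = (\<Sum>k<n. if k = j then A i j * d j else 0)"
      by (rule sum.cong) (auto simp: diagm_def)
    also have "\<dots> = A i j * d j" using True by simp
    finally show ?thesis using True by (simp add: mmul_def)
  next
    case False then show ?thesis using A by (auto simp: mmul_def mat_n_def)
  qed
qed

lemma idm_diag: "idm n = diagm n (\<lambda>_. 1)"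
  unfolding idm_def diagm_def by simp

lemma mmul_idm_left: "A \<in> mat_n n \<Longrightarrow> mmul n (idm n) A = A"
  by (simp add: idm_diag mmul_diag_left)

lemma mmul_idm_right: "A \<in> mat_n n \<Longrightarrow> mmul n A (idm n) = A"
  by (simp add: idm_diag mmul_diag_right)

lemma madj_diagm: "madj (diagm n d) = diagm n (\<lambda>i. cnj (d i))"
  unfolding madj_def diagm_def by (rule ext)+ auto

lemma diagm_mult: "mmul n (diagm n d) (diagm n e) = diagm n (\<lambda>i. d i * e i)"
  by (simp add: mmul_diag_left diagm_in, rule ext, rule ext, auto simp: diagm_def)

lemma diagm_cong: "(\<And>i. i < n \<Longrightarrow> d i = e i) \<Longrightarrow> diagm n d = diagm n e"
  unfolding diagm_def by (rule ext)+ auto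

lemma mmul_mzero_left[simp]: "mmul n mzero A = mzero"
  unfolding mmul_def mzero_def by (intro ext) auto
lemma mmul_mzero_right[simp]: "mmul n A mzero = mzero"
  unfolding mmul_def mzero_def by (intro ext) auto

lemma madj_mzero[simp]: "madj mzero = mzero" unfolding madj_def mzero_def by simp

lemma mmul_madd_right: "mmul n A (madd B C) = madd (mmul n A B) (mmul n A C)"
  unfolding mmul_def madd_def by (rule ext)+ (auto simp: distrib_left sum.distrib)

lemma mmul_madd_left: "mmul n (madd B C) A = madd (mmul n B A) (mmul n C A)"
  unfolding mmul_def madd_def by (rule ext)+ (auto simp: distrib_right sum.distrib)

lemma mmul_smult_right: "mmul n A (msmult c B) = msmult c (mmul n A B)"
  unfolding mmul_def msmult_def by (rule ext)+ (auto simp: sum_distrib_left mult.left_commute)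

lemma mmul_smult_left: "mmul n (msmult c B) A = msmult c (mmul n B A)"
  unfolding mmul_def msmult_def by (rule ext)+ (auto simp: sum_distrib_left mult.assoc)



definition Vg :: "nat \<Rightarrow> (nat \<Rightarrow> int) \<Rightarrow> complex \<Rightarrow> cmat" where
  "Vg n c z = diagm n (\<lambda>i. z powi c i)"

definition BalgG :: "nat \<Rightarrow> (nat \<Rightarrow> int) \<Rightarrow> nat list \<Rightarrow> ((complex \<Rightarrow> cmat) \<times> (complex \<Rightarrow> cmat)) set" where
  "BalgG n c ms = {(f1, f2). f1 \<in> Cdisk n \<and> f2 \<in> Cdisk n
      \<and> (\<forall>z. cmod z = 1 \<longrightarrow> f1 z = mmul n (madj (Vg n c z)) (mmul n (f2 z) (Vg n c z)))
      \<and> block_diag ms (f1 0)}"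

definition siso where
  "siso n A B \<longleftrightarrow> (\<exists>\<Phi>. bij_betw \<Phi> A B
     \<and> (\<forall>x\<in>A. \<forall>y\<in>A.
           \<Phi> (badd x y) = badd (\<Phi> x) (\<Phi> y) \<and> \<Phi> (bmul n x y) = bmul n (\<Phi> x) (\<Phi> y))
     \<and> (\<forall>x\<in>A. \<forall>c. \<Phi> (bsmult c x) = bsmult c (\<Phi> x))
     \<and> (\<forall>x\<in>A. \<Phi> (bstar x) = bstar (\<Phi> x)))"

lemma star_iso_siso: "star_iso_B n p q ms = siso n (Balg n p ms) (Balg n q ms)"
  unfolding star_iso_B_def siso_def by simp

lemma siso_refl: "siso n A A"
  unfolding siso_def by (rule exI[of _ id]) auto

lemma siso_trans: assumes "siso n A B" "siso n B C" shows "siso n A C"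
proof -
  obtain F where F: "bij_betw F A B"
     "\<forall>x\<in>A. \<forall>y\<in>A. F (badd x y) = badd (F x) (F y) \<and> F (bmul n x y) = bmul n (F x) (F y)"
     "\<forall>x\<in>A. \<forall>c. F (bsmult c x) = bsmult c (F x)" "\<forall>x\<in>A. F (bstar x) = bstar (F x)"
    using assms(1) unfolding siso_def by blast
  obtain G where G: "bij_betw G B C"
     "\<forall>x\<in>B. \<forall>y\<in>B. G (badd x y) = badd (G x) (G y) \<and> G (bmul n x y) = bmul n (G x) (G y)"
     "\<forall>x\<in>B. \<forall>c. G (bsmult c x) = bsmult c (G x)" "\<forall>x\<in>B. G (bstar x) = bstar (G x)"
    using assms(2) unfolding siso_def by blast
  have FB: "\<And>x. x \<in> A \<Longrightarrow> F x \<in> B" using F(1) bij_betwE by blast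
  show ?thesis unfolding siso_def
    apply (rule exI[of _ "G \<circ> F"])
    using F G FB bij_betw_trans[OF F(1) G(1)] by simp
qed

lemma BalgG_Balg: "Balg n p ms = BalgG n (\<lambda>i. if i = 0 then p else 0) ms"
proof -
  have "Vp n p z = Vg n (\<lambda>i. if i = 0 then p else 0) z" for z
    unfolding Vp_def Vg_def diagm_def by (rule ext)+ auto
  then show ?thesis unfolding Balg_def BalgG_def by simp
qed

lemma BalgG_cong: "(\<And>i. i < n \<Longrightarrow> c i = c' i) \<Longrightarrow> BalgG n c ms = BalgG n c' ms"
proof -
  assume h: "\<And>i. i < n \<Longrightarrow> c i = c' i"
  have "Vg n c z = Vg n c' z" for z unfolding Vg_def by (rule diagm_cong) (simp add: h)
  then show ?thesis unfolding BalgG_def by simp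
qed

definition cj :: "nat \<Rightarrow> (complex \<Rightarrow> cmat) \<Rightarrow> (complex \<Rightarrow> cmat) \<Rightarrow> complex \<Rightarrow> cmat" where
  "cj n U f = (\<lambda>z. mmul n (U z) (mmul n (f z) (madj (U z))))"

definition unit_on where
  "unit_on n U \<longleftrightarrow> (\<forall>z\<in>disk. mmul n (U z) (madj (U z)) = idm n \<and> mmul n (madj (U z)) (U z) = idm n)"

lemma Cdisk_in: "f \<in> Cdisk n \<Longrightarrow> f z \<in> mat_n n" unfolding Cdisk_def by auto
lemma Cdisk_out: "f \<in> Cdisk n \<Longrightarrow> z \<notin> disk \<Longrightarrow> f z = mzero" unfolding Cdisk_def by auto

lemma madj_idm[simp]: "madj (idm n) = idm n" unfolding madj_def idm_def by (intro ext) auto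

lemma mmul_cancel:
  assumes "mmul n V U = idm n" "Y \<in> mat_n n" shows "mmul n V (mmul n U Y) = Y"
  by (simp add: mmul_assoc[symmetric] assms mmul_idm_left)

lemma cj_cj:
  assumes "\<forall>z\<in>disk. mmul n (V z) (U z) = idm n" "f \<in> Cdisk n"
  shows "cj n V (cj n U f) = f"
proof
  fix z show "cj n V (cj n U f) z = f z"
  proof (cases "z \<in> disk")
    case True
    have 1: "mmul n (V z) (U z) = idm n" using assms True by auto
    have 2: "mmul n (madj (U z)) (madj (V z)) = idm n"
      using arg_cong[OF 1, of madj] by (simp add: madj_mmul)
    have "cj n V (cj n U f) z = mmul n (V z) (mmul n (U z) (mmul n (f z) (mmul n (madj (U z)) (madj (V z)))))"
      unfolding cj_def by (simp add: mmul_assoc)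
    also have "\<dots> = f z" using 1 2 assms(2) by (simp add: mmul_idm_right Cdisk_in mmul_cancel)
    finally show ?thesis .
  next
    case False then show ?thesis using assms(2) by (simp add: cj_def Cdisk_out)
  qed
qed

lemma cj_add: "cj n U (\<lambda>z. madd (f z) (g z)) = (\<lambda>z. madd (cj n U f z) (cj n U g z))"
  unfolding cj_def by (simp add: mmul_madd_left mmul_madd_right)

lemma cj_smult: "cj n U (\<lambda>z. msmult c (f z)) = (\<lambda>z. msmult c (cj n U f z))"
  unfolding cj_def by (simp add: mmul_smult_left mmul_smult_right)

lemma cj_star: "cj n U (\<lambda>z. madj (f z)) = (\<lambda>z. madj (cj n U f z))"
  unfolding cj_def by (simp add: madj_mmul mmul_assoc)

lemma cj_mul:
  assumes "unit_on n U" "f \<in> Cdisk n" "g \<in> Cdisk n"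
  shows "cj n U (\<lambda>z. mmul n (f z) (g z)) = (\<lambda>z. mmul n (cj n U f z) (cj n U g z))"
proof
  fix z show "cj n U (\<lambda>z. mmul n (f z) (g z)) z = mmul n (cj n U f z) (cj n U g z)"
  proof (cases "z \<in> disk")
    case True
    have 1: "mmul n (madj (U z)) (U z) = idm n" using assms True unfolding unit_on_def by auto
    have "mmul n (cj n U f z) (cj n U g z) = mmul n (U z) (mmul n (f z) (mmul n (madj (U z)) (mmul n (U z) (mmul n (g z) (madj (U z))))))"
      unfolding cj_def by (simp add: mmul_assoc)
    also have "\<dots> = mmul n (U z) (mmul n (f z) (mmul n (g z) (madj (U z))))"
      by (simp add: mmul_cancel[OF 1] mmul_in)
    finally show ?thesis unfolding cj_def by (simp add: mmul_assoc)
  next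
    case False then show ?thesis using assms by (simp add: cj_def Cdisk_out)
  qed
qed



lemma unit_on_madj: "unit_on n U \<Longrightarrow> unit_on n (\<lambda>z. madj (U z))"
  unfolding unit_on_def by auto

lemma circle_disk: "cmod z = 1 \<Longrightarrow> z \<in> disk" unfolding disk_def by simp

lemma Vg_in: "Vg n c z \<in> mat_n n" unfolding Vg_def by (rule diagm_in)

lemma glue_transfer:
  assumes bd: "mmul n A1 (madj V) = mmul n (madj V') A2"
  shows "mmul n A1 (mmul n (mmul n (madj V) (mmul n X V)) (madj A1))
       = mmul n (madj V') (mmul n (mmul n A2 (mmul n X (madj A2))) V')"
proof -
  have bd': "mmul n V (madj A1) = mmul n (madj A2) V'"
    using arg_cong[OF bd, of madj] by (simp add: madj_mmul)
  have k: "mmul n A1 (mmul n (madj V) Y) = mmul n (madj V') (mmul n A2 Y)" for Y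
    by (simp add: mmul_assoc[symmetric] bd)
  show ?thesis by (simp add: mmul_assoc bd' k)
qed

lemma conj_iso:
  assumes u1: "unit_on n U1" and u2: "unit_on n U2"
    and P1: "\<And>f. f \<in> Cdisk n \<Longrightarrow> block_diag ms (f 0) \<Longrightarrow> cj n U1 f \<in> Cdisk n \<and> block_diag ms (cj n U1 f 0)"
    and P1': "\<And>f. f \<in> Cdisk n \<Longrightarrow> block_diag ms (f 0) \<Longrightarrow> cj n (\<lambda>z. madj (U1 z)) f \<in> Cdisk n \<and> block_diag ms (cj n (\<lambda>z. madj (U1 z)) f 0)"
    and P2: "\<And>f. f \<in> Cdisk n \<Longrightarrow> cj n U2 f \<in> Cdisk n"
    and P2': "\<And>f. f \<in> Cdisk n \<Longrightarrow> cj n (\<lambda>z. madj (U2 z)) f \<in> Cdisk n"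
    and bd: "\<And>z. cmod z = 1 \<Longrightarrow> mmul n (U1 z) (madj (Vg n c z)) = mmul n (madj (Vg n c' z)) (U2 z)"
  shows "siso n (BalgG n c ms) (BalgG n c' ms)"
proof -
  define F where "F = (\<lambda>x. (cj n U1 (fst x), cj n U2 (snd x)))"
  define G where "G = (\<lambda>x. (cj n (\<lambda>z. madj (U1 z)) (fst x), cj n (\<lambda>z. madj (U2 z)) (snd x)))"
  have bdi: "mmul n (madj (U1 z)) (madj (Vg n c' z)) = mmul n (madj (Vg n c z)) (madj (U2 z))"
    if z: "cmod z = 1" for z
  proof -
    have zd: "z \<in> disk" using z circle_disk by auto
    have a: "mmul n (madj (U1 z)) (U1 z) = idm n" and b: "mmul n (U2 z) (madj (U2 z)) = idm n"
      using u1 u2 zd unfolding unit_on_def by auto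
    have "mmul n (madj (U1 z)) (mmul n (mmul n (U1 z) (madj (Vg n c z))) (madj (U2 z)))
        = mmul n (madj (U1 z)) (mmul n (mmul n (madj (Vg n c' z)) (U2 z)) (madj (U2 z)))"
      by (simp add: bd z)
    then show ?thesis
      by (simp add: mmul_assoc mmul_cancel[OF a] mmul_in mmul_idm_right[OF madj_in[OF Vg_in]] b)
  qed
  have FA: "F x \<in> BalgG n c' ms" if x: "x \<in> BalgG n c ms" for x
  proof -
    obtain f1 f2 where x: "x = (f1, f2)" "f1 \<in> Cdisk n" "f2 \<in> Cdisk n"
      "\<And>z. cmod z = 1 \<Longrightarrow> f1 z = mmul n (madj (Vg n c z)) (mmul n (f2 z) (Vg n c z))"
      "block_diag ms (f1 0)" using x unfolding BalgG_def by auto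
    show ?thesis unfolding BalgG_def F_def using x P1[of f1] P2[of f2]
      by (auto simp: cj_def glue_transfer[OF bd])
  qed
  have GB: "G x \<in> BalgG n c ms" if x: "x \<in> BalgG n c' ms" for x
  proof -
    obtain f1 f2 where x: "x = (f1, f2)" "f1 \<in> Cdisk n" "f2 \<in> Cdisk n"
      "\<And>z. cmod z = 1 \<Longrightarrow> f1 z = mmul n (madj (Vg n c' z)) (mmul n (f2 z) (Vg n c' z))"
      "block_diag ms (f1 0)" using x unfolding BalgG_def by auto
    show ?thesis unfolding BalgG_def G_def using x P1'[of f1] P2'[of f2]
      by (auto simp: cj_def glue_transfer[OF bdi, simplified madj_madj])
  qed
  have uu1: "\<forall>z\<in>disk. mmul n (madj (U1 z)) (U1 z) = idm n" "\<forall>z\<in>disk. mmul n (U1 z) (madj (U1 z)) = idm n"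
   and uu2: "\<forall>z\<in>disk. mmul n (madj (U2 z)) (U2 z) = idm n" "\<forall>z\<in>disk. mmul n (U2 z) (madj (U2 z)) = idm n"
    using u1 u2 unfolding unit_on_def by auto
  have GF: "G (F x) = x" if "x \<in> BalgG n c ms" for x
    using that unfolding F_def G_def BalgG_def
    by (auto simp: cj_cj[OF uu1(1)] cj_cj[OF uu2(1)])
  have FG: "F (G x) = x" if "x \<in> BalgG n c' ms" for x
    using that unfolding F_def G_def BalgG_def
    by (auto simp: cj_cj[OF uu1(2)] cj_cj[OF uu2(2)])
  have bij: "bij_betw F (BalgG n c ms) (BalgG n c' ms)"
    by (rule bij_betw_byWitness[where f'=G]) (use GF FG FA GB in auto)
  have inC: "fst x \<in> Cdisk n" "snd x \<in> Cdisk n" if "x \<in> BalgG n c ms" for x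
    using that unfolding BalgG_def by auto
  show ?thesis unfolding siso_def
    apply (rule exI[of _ F])
    using bij inC
    by (auto simp: F_def badd_def bmul_def bsmult_def bstar_def cj_add cj_smult cj_star
        cj_mul[OF u1] cj_mul[OF u2])
qed



lemma mult_cnj_unit: "cmod w = 1 \<Longrightarrow> w * cnj w = 1"
  using complex_norm_square[of w] by simp

lemma cj_diag:
  assumes "X \<in> mat_n n"
  shows "mmul n (diagm n d) (mmul n X (madj (diagm n d))) = (\<lambda>i j. d i * X i j * cnj (d j))"
proof -
  have "mmul n X (madj (diagm n d)) = (\<lambda>i j. X i j * cnj (d j))"
    by (simp add: madj_diagm mmul_diag_right assms)
  moreover have "(\<lambda>i j. X i j * cnj (d j)) \<in> mat_n n" using assms unfolding mat_n_def by auto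
  ultimately show ?thesis by (simp add: mmul_diag_left mult.assoc)
qed

lemma unit_on_diag:
  assumes "\<And>z i. cmod (d z i) = 1"
  shows "unit_on n (\<lambda>z. diagm n (d z))"
proof -
  have "d z i * cnj (d z i) = 1" "cnj (d z i) * d z i = 1" for z i
    using assms[of z i] by (simp_all add: mult_cnj_unit mult.commute)
  then show ?thesis unfolding unit_on_def
    by (simp add: madj_diagm diagm_mult idm_diag)
qed

lemma unit_on_idm: "unit_on n (\<lambda>z. idm n)"
  unfolding unit_on_def by (simp add: idm_diag madj_diagm diagm_mult)

lemma cj_idm: "f \<in> Cdisk n \<Longrightarrow> cj n (\<lambda>z. idm n) f = f"
  unfolding cj_def by (simp add: mmul_idm_left mmul_idm_right mmul_in Cdisk_in)

lemma twist_preserve: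
  assumes unit: "\<And>z i. cmod (d z i) = 1"
    and cont: "\<And>x i. x \<noteq> 0 \<Longrightarrow> isCont (\<lambda>z. d z i) x"
    and same: "\<And>z i j. blk ms i = blk ms j \<Longrightarrow> d z i = d z j"
    and d0: "\<And>i. d 0 i = 1"
    and f: "f \<in> Cdisk n" and bd: "block_diag ms (f 0)"
  shows "cj n (\<lambda>z. diagm n (d z)) f \<in> Cdisk n \<and> block_diag ms (cj n (\<lambda>z. diagm n (d z)) f 0)"
proof -
  have eq: "cj n (\<lambda>z. diagm n (d z)) f = (\<lambda>z i j. d z i * f z i j * cnj (d z j))"
    unfolding cj_def by (rule ext) (simp add: cj_diag Cdisk_in[OF f])
  have fin: "f z \<in> mat_n n" for z using Cdisk_in[OF f] .
  have mn: "(\<lambda>i j. d z i * f z i j * cnj (d z j)) \<in> mat_n n" for z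
    using fin[of z] unfolding mat_n_def by auto
  have out: "(\<lambda>i j. d z i * f z i j * cnj (d z j)) = mzero" if "z \<notin> disk" for z
    using Cdisk_out[OF f that] unfolding mzero_def by auto
  have fc: "continuous_on disk (\<lambda>z. f z i j)" for i j using f unfolding Cdisk_def by auto
  have uu: "d z i * cnj (d z i) = 1" for z i
    using unit[of z i] by (simp add: mult_cnj_unit)
  have cont_ij: "continuous_on disk (\<lambda>z. d z i * f z i j * cnj (d z j))" for i j
  proof (cases "blk ms i = blk ms j")
    case True
    have e: "(\<lambda>z. d z i * f z i j * cnj (d z j)) = (\<lambda>z. f z i j)"
      using same[OF True] uu by (auto simp: mult.commute mult.left_commute)
    show ?thesis unfolding e by (rule fc)
  next
    case False
    have f0: "f 0 i j = 0" using bd False unfolding block_diag_def by auto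
    show ?thesis unfolding continuous_on_eq_continuous_within
    proof
      fix x assume x: "x \<in> disk"
      show "continuous (at x within disk) (\<lambda>z. d z i * f z i j * cnj (d z j))"
      proof (cases "x = 0")
        case False
        have "continuous (at x within disk) (\<lambda>z. d z i)" "continuous (at x within disk) (\<lambda>z. d z j)"
          using cont[OF False] continuous_at_imp_continuous_at_within by auto
        moreover have "continuous (at x within disk) (\<lambda>z. f z i j)"
          using fc x continuous_on_eq_continuous_within by blast
        ultimately show ?thesis by (intro continuous_intros) auto
      next
        case True
        have "((\<lambda>z. f z i j) \<longlongrightarrow> 0) (at 0 within disk)"
          using fc x True f0 continuous_on_eq_continuous_within continuous_within by metis
        then have "((\<lambda>z. norm (f z i j)) \<longlongrightarrow> 0) (at 0 within disk)"
          by (simp add: tendsto_norm_zero)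
        then have "((\<lambda>z. d z i * f z i j * cnj (d z j)) \<longlongrightarrow> 0) (at 0 within disk)"
          by (rule Lim_null_comparison[rotated]) (simp add: norm_mult unit)
        then show ?thesis using True f0 by (simp add: continuous_within)
      qed
    qed
  qed
  have "cj n (\<lambda>z. diagm n (d z)) f 0 = f 0" unfolding eq by (simp add: d0)
  then show ?thesis using bd mn out cont_ij unfolding Cdisk_def eq[symmetric]
    by (simp add: eq)
qed

definition sg :: "complex \<Rightarrow> complex" where "sg z = (if z = 0 then 1 else sgn z)"

lemma sg_unit: "cmod (sg z) = 1" unfolding sg_def by (simp add: norm_sgn)

lemma sg_cont: "x \<noteq> 0 \<Longrightarrow> isCont sg x"
proof -
  assume x: "x \<noteq> 0"
  have "eventually (\<lambda>z. sg z = sgn z) (nhds x)"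
    using t1_space_nhds[OF x] by eventually_elim (simp add: sg_def)
  moreover have "isCont sgn x" using x by (intro continuous_intros) auto
  ultimately show ?thesis using isCont_cong by blast
qed

lemma sg_circle: "cmod z = 1 \<Longrightarrow> sg z = z"
  unfolding sg_def by (auto simp: sgn_eq)

lemma cnj_circle: "cmod z = 1 \<Longrightarrow> cnj z = inverse z"
proof -
  assume "cmod z = 1"
  then have "z * cnj z = 1" by (simp add: mult_cnj_unit)
  moreover have "z \<noteq> 0" using \<open>cmod z = 1\<close> by auto
  ultimately show ?thesis by (simp add: field_simps)
qed


lemma twist_step:
  fixes a :: "nat \<Rightarrow> int"
  shows "siso n (BalgG n c ms) (BalgG n (\<lambda>i. c i - a (blk ms i)) ms)"
proof -
  define d where "d = (\<lambda>z i. sg z powi a (blk ms i))"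
  have du: "cmod (d z i) = 1" for z i by (simp add: d_def norm_power_int sg_unit)
  have dc: "isCont (\<lambda>z. d z i) x" if "x \<noteq> 0" for x i
    unfolding d_def using that sg_cont[OF that] sg_unit[of x]
    by (intro continuous_intros) auto
  have dd: "cmod (cnj (d z i)) = 1" for z i using du by simp
  have dcc: "isCont (\<lambda>z. cnj (d z i)) x" if "x \<noteq> 0" for x i
    using dc[OF that] by (intro continuous_intros)
  have d0: "d 0 i = 1" for i by (simp add: d_def sg_def)
  have ds: "d z i = d z j" if "blk ms i = blk ms j" for z i j using that by (simp add: d_def)
  have dsc: "cnj (d z i) = cnj (d z j)" if "blk ms i = blk ms j" for z i j using ds[OF that] by simp
  have dc0: "cnj (d 0 i) = 1" for i using d0 by simp
  show ?thesis
  proof (rule conj_iso[of n "\<lambda>z. diagm n (d z)" "\<lambda>z. idm n"])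
    show "unit_on n (\<lambda>z. diagm n (d z))" by (rule unit_on_diag[OF du])
    show "unit_on n (\<lambda>z. idm n)" by (rule unit_on_idm)
    show "cj n (\<lambda>z. diagm n (d z)) f \<in> Cdisk n \<and> block_diag ms (cj n (\<lambda>z. diagm n (d z)) f 0)"
      if "f \<in> Cdisk n" "block_diag ms (f 0)" for f
      by (rule twist_preserve[OF du dc ds d0 that])
    show "cj n (\<lambda>z. madj (diagm n (d z))) f \<in> Cdisk n \<and> block_diag ms (cj n (\<lambda>z. madj (diagm n (d z))) f 0)"
      if "f \<in> Cdisk n" "block_diag ms (f 0)" for f
      unfolding madj_diagm
      by (rule twist_preserve[OF dd dcc dsc dc0 that])
    show "cj n (\<lambda>z. idm n) f \<in> Cdisk n" if "f \<in> Cdisk n" for f using cj_idm that by simp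
    show "cj n (\<lambda>z. madj (idm n)) f \<in> Cdisk n" if "f \<in> Cdisk n" for f using cj_idm that by simp
    show "mmul n (diagm n (d z)) (madj (Vg n c z)) = mmul n (madj (Vg n (\<lambda>i. c i - a (blk ms i)) z)) (idm n)"
      if z: "cmod z = 1" for z
    proof -
      have z0: "z \<noteq> 0" using z by auto
      have "d z i * inverse z powi c i = inverse z powi (c i - a (blk ms i))" for i
        using z0 by (simp add: d_def sg_circle[OF z] power_int_diff power_int_inverse divide_inverse mult.commute)
      then show ?thesis
        by (simp add: Vg_def madj_diagm diagm_mult mmul_idm_right diagm_in cnj_circle[OF z])
    qed
  qed
qed



definition emb :: "nat \<Rightarrow> nat \<Rightarrow> complex \<Rightarrow> complex \<Rightarrow> complex \<Rightarrow> complex \<Rightarrow> cmat" where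
  "emb n J a b c d = (\<lambda>i j. if i = 0 \<and> j = 0 then a else if i = 0 \<and> j = J then b
     else if i = J \<and> j = 0 then c else if i = J \<and> j = J then d else if i = j \<and> i < n then 1 else 0)"

lemma sum_split2:
  fixes J n :: nat
  assumes "0 < J" "J < n"
  shows "(\<Sum>k<n. f k) = f 0 + f J + (\<Sum>k\<in>{..<n} - {0, J}. f k)"
proof -
  have "(\<Sum>k<n. f k) = f 0 + (\<Sum>k\<in>{..<n} - {0}. f k)"
    using assms sum.remove[of "{..<n}" 0 f] by (simp add: less_trans[OF assms])
  also have "(\<Sum>k\<in>{..<n} - {0}. f k) = f J + (\<Sum>k\<in>{..<n} - {0} - {J}. f k)"
    using assms sum.remove[of "{..<n} - {0}" J f] by simp
  finally show ?thesis by (simp add: Diff_insert2[symmetric] insert_commute add.assoc)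
qed

lemma emb_mult:
  assumes J: "0 < J" "J < n"
  shows "mmul n (emb n J a b c d) (emb n J a' b' c' d') =
         emb n J (a*a' + b*c') (a*b' + b*d') (c*a' + d*c') (c*b' + d*d')"
proof (intro ext)
  fix i j
  let ?A = "emb n J a b c d" and ?B = "emb n J a' b' c' d'"
  show "mmul n ?A ?B i j = emb n J (a*a' + b*c') (a*b' + b*d') (c*a' + d*c') (c*b' + d*d') i j"
  proof (cases "i < n \<and> j < n")
    case False
    then show ?thesis using J unfolding mmul_def emb_def by auto
  next
    case True
    have rest: "(\<Sum>k\<in>{..<n} - {0, J}. ?A i k * ?B k j) = (\<Sum>k\<in>{..<n} - {0, J}. if k = i then (if i = j then 1 else 0) else 0)"
      by (rule sum.cong) (auto simp: emb_def)
    have "mmul n ?A ?B i j = ?A i 0 * ?B 0 j + ?A i J * ?B J j + (\<Sum>k\<in>{..<n} - {0, J}. if k = i then (if i = j then 1 else 0) else 0)"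
      using True by (simp add: mmul_def sum_split2[OF J] rest)
    also have "\<dots> = emb n J (a*a' + b*c') (a*b' + b*d') (c*a' + d*c') (c*b' + d*d') i j"
      using True J by (auto simp: emb_def)
    finally show ?thesis .
  qed
qed

lemma emb_adj: "madj (emb n J a b c d) = emb n J (cnj a) (cnj c) (cnj b) (cnj d)"
  unfolding madj_def emb_def by (intro ext) auto

lemma emb_idm: "0 < J \<Longrightarrow> J < n \<Longrightarrow> emb n J 1 0 0 1 = idm n"
  unfolding emb_def idm_def by (intro ext) auto

lemma emb_diag: "0 < J \<Longrightarrow> J < n \<Longrightarrow> emb n J a 0 0 d = diagm n (\<lambda>i. if i = 0 then a else if i = J then d else 1)"
  unfolding emb_def diagm_def by (intro ext) auto

lemma mmul_cont:
  assumes "\<And>i j. continuous_on S (\<lambda>z. A z i j)" "\<And>i j. continuous_on S (\<lambda>z. B z i j)"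
  shows "continuous_on S (\<lambda>z. mmul n (A z) (B z) i j)"
proof (cases "i < n \<and> j < n")
  case True
  then show ?thesis unfolding mmul_def using assms by (simp add: continuous_intros)
next
  case False
  then have e: "(\<lambda>z. mmul n (A z) (B z) i j) = (\<lambda>z. 0)" by (auto simp: mmul_def)
  show ?thesis unfolding e by (simp add: continuous_on_const)
qed

lemma madj_cont:
  assumes "\<And>i j. continuous_on S (\<lambda>z. A z i j)"
  shows "continuous_on S (\<lambda>z. madj (A z) i j)"
  unfolding madj_def using assms by (simp add: continuous_intros)

lemma cont_cj:
  assumes U: "\<And>i j. continuous_on disk (\<lambda>z. U z i j)" and f: "f \<in> Cdisk n"
  shows "cj n U f \<in> Cdisk n"
proof -
  have fc: "continuous_on disk (\<lambda>z. f z i j)" for i j using f unfolding Cdisk_def by auto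
  have "continuous_on disk (\<lambda>z. cj n U f z i j)" for i j
    unfolding cj_def by (intro mmul_cont madj_cont U fc)
  then show ?thesis unfolding Cdisk_def using f
    by (auto simp: cj_def mmul_in Cdisk_out)
qed

lemma emb_cont:
  assumes "continuous_on S A" "continuous_on S B" "continuous_on S C" "continuous_on S D"
  shows "continuous_on S (\<lambda>z. emb n J (A z) (B z) (C z) (D z) i j)"
proof -
  have e: "(\<lambda>z. emb n J (A z) (B z) (C z) (D z) i j) = (if i = 0 \<and> j = 0 then A else if i = 0 \<and> j = J then B
     else if i = J \<and> j = 0 then C else if i = J \<and> j = J then D else if i = j \<and> i < n then (\<lambda>_. 1) else (\<lambda>_. 0))"
    by (rule ext) (simp add: emb_def)
  show ?thesis unfolding e using assms by (simp add: continuous_on_const)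
qed

definition gr :: "int \<Rightarrow> complex \<Rightarrow> complex" where
  "gr e z = (if 0 \<le> e then z ^ nat e else cnj z ^ nat (-e))"
definition br :: "int \<Rightarrow> complex \<Rightarrow> complex" where
  "br e z = complex_of_real (sqrt (1 - (cmod (gr e z))\<^sup>2))"
definition Rot :: "nat \<Rightarrow> nat \<Rightarrow> int \<Rightarrow> complex \<Rightarrow> cmat" where
  "Rot n J e z = emb n J (gr e z) (- br e z) (br e z) (cnj (gr e z))"

lemma gr_cont: "continuous_on S (gr e)"
  unfolding gr_def by (cases "0 \<le> e") (simp_all add: continuous_intros)

lemma br_cont: "continuous_on S (br e)"
  unfolding br_def by (intro continuous_intros gr_cont)

lemma gr_le: "z \<in> disk \<Longrightarrow> cmod (gr e z) \<le> 1"
  unfolding gr_def disk_def by (auto simp: norm_power power_le_one)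

lemma gb_one: assumes "z \<in> disk" shows "gr e z * cnj (gr e z) + br e z * br e z = 1"
proof -
  let ?g = "gr e z"
  have le: "(cmod ?g)\<^sup>2 \<le> 1" using gr_le[OF assms] by (simp add: power_le_one)
  have "?g * cnj ?g = complex_of_real ((cmod ?g)\<^sup>2)" by (metis complex_norm_square of_real_power)
  moreover have "br e z * br e z = complex_of_real (1 - (cmod ?g)\<^sup>2)"
    unfolding br_def using le by (simp flip: of_real_mult)
  ultimately show ?thesis by (simp flip: of_real_add)
qed

lemma br_real: "cnj (br e z) = br e z" unfolding br_def by simp

lemma unit_Rot: assumes J: "0 < J" "J < n" shows "unit_on n (Rot n J e)"
  unfolding unit_on_def Rot_def
proof
  fix z assume z: "z \<in> disk"
  note g = gb_one[OF z, of e]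
  show "mmul n (emb n J (gr e z) (- br e z) (br e z) (cnj (gr e z)))
         (madj (emb n J (gr e z) (- br e z) (br e z) (cnj (gr e z)))) = idm n \<and>
        mmul n (madj (emb n J (gr e z) (- br e z) (br e z) (cnj (gr e z))))
         (emb n J (gr e z) (- br e z) (br e z) (cnj (gr e z))) = idm n"
    using g by (simp add: emb_adj emb_mult[OF J] br_real emb_idm[OF J] algebra_simps)
qed

lemma gr_circle: assumes "cmod z = 1" shows "gr e z = z powi e"
  using cnj_circle[OF assms] unfolding gr_def power_int_def
  by (simp add: power_inverse)

lemma rotation_step:
  assumes J: "0 < J" "J < n"
  shows "siso n (BalgG n c ms) (BalgG n (\<lambda>i. c i + (if i = 0 then e else if i = J then -e else 0)) ms)"
proof (rule conj_iso[of n "\<lambda>z. idm n" "Rot n J e"])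
  show "unit_on n (\<lambda>z. idm n)" by (rule unit_on_idm)
  show "unit_on n (Rot n J e)" by (rule unit_Rot[OF J])
  show "cj n (\<lambda>z. idm n) f \<in> Cdisk n \<and> block_diag ms (cj n (\<lambda>z. idm n) f 0)"
    if "f \<in> Cdisk n" "block_diag ms (f 0)" for f using cj_idm that by simp
  show "cj n (\<lambda>z. madj (idm n)) f \<in> Cdisk n \<and> block_diag ms (cj n (\<lambda>z. madj (idm n)) f 0)"
    if "f \<in> Cdisk n" "block_diag ms (f 0)" for f using cj_idm that by simp
  have rc: "continuous_on disk (\<lambda>z. Rot n J e z i j)" for i j
    unfolding Rot_def by (intro emb_cont gr_cont br_cont continuous_intros)
  show "cj n (Rot n J e) f \<in> Cdisk n" if "f \<in> Cdisk n" for f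
    by (rule cont_cj[OF rc that])
  show "cj n (\<lambda>z. madj (Rot n J e z)) f \<in> Cdisk n" if "f \<in> Cdisk n" for f
    by (rule cont_cj[OF madj_cont[OF rc] that])
  show "mmul n (idm n) (madj (Vg n c z)) =
        mmul n (madj (Vg n (\<lambda>i. c i + (if i = 0 then e else if i = J then -e else 0)) z)) (Rot n J e z)"
    if z: "cmod z = 1" for z
  proof -
    have z0: "z \<noteq> 0" using z by auto
    have br0: "br e z = 0" unfolding br_def using z by (simp add: norm_power_int gr_circle)
    have cz: "cnj z powi k = z powi (-k)" for k
      by (simp add: cnj_circle[OF z] power_int_inverse power_int_minus)
    have R: "Rot n J e z = diagm n (\<lambda>i. if i = 0 then z powi e else if i = J then z powi (-e) else 1)"
      unfolding Rot_def br0 by (simp add: emb_diag[OF J] gr_circle[OF z] cz)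
    have "z powi (- c i) = z powi (-(c i + (if i = 0 then e else if i = J then -e else 0))) *
           (if i = 0 then z powi e else if i = J then z powi (-e) else 1)" for i
      using z0 J by (auto simp flip: power_int_add)
    then show ?thesis
      by (simp add: R Vg_def madj_diagm mmul_idm_left diagm_in diagm_mult cz)
  qed
qed



lemma rotations_all:
  assumes n: "n \<ge> 1"
  shows "siso n (BalgG n c ms) (BalgG n (\<lambda>i. if i = 0 then (\<Sum>j<n. c j) else 0) ms)"
proof -
  define cm where "cm m = (\<lambda>i. if i = 0 then (\<Sum>j<m. c j) else if i < m then 0 else c i)" for m
  have step: "siso n (BalgG n c ms) (BalgG n (cm (Suc k)) ms)" if "Suc k \<le> n" for k
    using that
  proof (induction k)
    case 0
    have "cm (Suc 0) = c" unfolding cm_def by auto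
    then show ?case by (simp add: siso_refl)
  next
    case (Suc k)
    have J: "0 < Suc k" "Suc k < n" using Suc.prems by auto
    have IH: "siso n (BalgG n c ms) (BalgG n (cm (Suc k)) ms)" using Suc by simp
    have "(\<lambda>i. cm (Suc k) i + (if i = 0 then c (Suc k) else if i = Suc k then - c (Suc k) else 0))
          = cm (Suc (Suc k))"
      unfolding cm_def by (auto simp: fun_eq_iff)
    then have "siso n (BalgG n (cm (Suc k)) ms) (BalgG n (cm (Suc (Suc k))) ms)"
      using rotation_step[OF J, of "cm (Suc k)" ms "c (Suc k)"] by simp
    then show ?case using IH siso_trans by blast
  qed
  obtain k where k: "n = Suc k" using n by (cases n) auto
  have "siso n (BalgG n c ms) (BalgG n (cm n) ms)" using step[of k] k by simp
  moreover have "BalgG n (cm n) ms = BalgG n (\<lambda>i. if i = 0 then (\<Sum>j<n. c j) else 0) ms"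
    by (rule BalgG_cong) (simp add: cm_def)
  ultimately show ?thesis by simp
qed

lemma blk_Cons: "blk (x # xs) i = (if i < x then 0 else Suc (blk xs (i - x)))"
proof (cases "i < x")
  case True
  have "{t. t < length (x # xs) \<and> sum_list (take (Suc t) (x # xs)) \<le> i} = {}"
    using True by auto
  then show ?thesis using True by (simp add: blk_def)
next
  case False
  have "{t. t < length (x # xs) \<and> sum_list (take (Suc t) (x # xs)) \<le> i}
        = insert 0 (Suc ` {t. t < length xs \<and> sum_list (take (Suc t) xs) \<le> i - x})"
    (is "?L = ?R")
  proof
    show "?L \<subseteq> ?R"
    proof
      fix t assume t: "t \<in> ?L"
      show "t \<in> ?R"
      proof (cases t)
        case 0 then show ?thesis by simp
      next
        case (Suc s)
        then have "s < length xs" "sum_list (take (Suc s) xs) \<le> i - x" using t by auto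
        then show ?thesis using Suc by auto
      qed
    qed
    show "?R \<subseteq> ?L" using False by auto
  qed
  moreover have "card ?R = Suc (blk xs (i - x))"
    unfolding blk_def by (subst card_insert_disjoint) (auto simp: card_image)
  ultimately show ?thesis using False by (simp add: blk_def)
qed

lemma sum_lessThan_add_nat: "(\<Sum>i<x + S. f i) = (\<Sum>i<x. f i) + (\<Sum>i<S. f (x + i))"
  for f :: "nat \<Rightarrow> int"
  by (induction S) (simp_all add: add.assoc)

lemma sum_blk: "(\<Sum>i<sum_list ms. a (blk ms i)) = (\<Sum>t<length ms. a t * int (ms ! t))"
proof (induction ms arbitrary: a)
  case Nil then show ?case by simp
next
  case (Cons x xs)
  have "(\<Sum>i<sum_list (x # xs). a (blk (x # xs) i)) = (\<Sum>i<x. a 0) + (\<Sum>i<sum_list xs. a (Suc (blk xs i)))"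
    by (simp add: sum_lessThan_add_nat blk_Cons)
  also have "\<dots> = a 0 * int x + (\<Sum>t<length xs. a (Suc t) * int (xs ! t))"
    using Cons.IH[of "\<lambda>t. a (Suc t)"] by simp
  also have "\<dots> = (\<Sum>t<length (x # xs). a t * int ((x # xs) ! t))"
    unfolding length_Cons sum.lessThan_Suc_shift by simp
  finally show ?case .
qed

lemma bezout_list: "\<exists>b. (\<Sum>t<length ms. b t * int (ms ! t)) = int (Gcd (set ms))"
proof (induction ms)
  case Nil then show ?case by simp
next
  case (Cons x xs)
  then obtain b where b: "(\<Sum>t<length xs. b t * int (xs ! t)) = int (Gcd (set xs))" by blast
  obtain u v where uv: "u * int x + v * int (Gcd (set xs)) = gcd (int x) (int (Gcd (set xs)))"
    using bezout_int by blast
  define b' where "b' t = (if t = 0 then u else v * b (t - 1))" for t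
  have "(\<Sum>t<length (x # xs). b' t * int ((x # xs) ! t)) = u * int x + (\<Sum>t<length xs. v * b t * int (xs ! t))"
    unfolding length_Cons sum.lessThan_Suc_shift by (simp add: b'_def)
  also have "\<dots> = u * int x + v * int (Gcd (set xs))"
    by (simp add: b[symmetric] sum_distrib_left mult.assoc)
  also have "\<dots> = int (Gcd (set (x # xs)))" using uv by simp
  finally show ?case by blast
qed



theorem theorem2:
  fixes n :: nat and ms :: "nat list" and l1 l2 :: int
  assumes "n \<ge> 1" and "sum_list ms = n"
    and "l1 mod int (Gcd (set ms)) = l2 mod int (Gcd (set ms))"
  shows "star_iso_B n l1 l2 ms"
proof -
  let ?g = "int (Gcd (set ms))"
  have "?g dvd l1 - l2" using assms(3) by (simp add: mod_eq_dvd_iff)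
  then obtain k where k: "l1 - l2 = ?g * k" by (auto elim: dvdE)
  obtain b where b: "(\<Sum>t<length ms. b t * int (ms ! t)) = ?g" using bezout_list by blast
  define a where "a t = k * b t" for t
  have suma: "(\<Sum>i<n. a (blk ms i)) = l1 - l2"
    using sum_blk[where ms=ms and a=a] assms(2) b k
    by (simp add: a_def mult.assoc sum_distrib_left[symmetric] mult.commute)
  define c1 where "c1 = (\<lambda>i::nat. if i = 0 then l1 else 0)"
  define c' where "c' = (\<lambda>i. c1 i - a (blk ms i))"
  have s1: "siso n (Balg n l1 ms) (BalgG n c' ms)"
    unfolding BalgG_Balg c'_def c1_def by (rule twist_step)
  have s2: "siso n (BalgG n c' ms) (BalgG n (\<lambda>i. if i = 0 then (\<Sum>j<n. c' j) else 0) ms)"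
    by (rule rotations_all[OF assms(1)])
  have "(\<Sum>j<n. c1 j) = l1" using assms(1) by (simp add: c1_def)
  then have sc: "(\<Sum>j<n. c' j) = l2" unfolding c'_def using suma by (simp add: sum_subtractf)
  have s2': "siso n (BalgG n c' ms) (Balg n l2 ms)" unfolding BalgG_Balg using s2 unfolding sc .
  show ?thesis unfolding star_iso_siso using siso_trans[OF s1 s2'] .
qed


end
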